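(* Let $q\ge2$ and let $U$ be a $q\times q$ row-stochastic matrix with strictly positive entries. There is a constant $C_4$ independent of $n$ such that for all sufficiently large $n$: (i) if $\mathbf{t}_1,\mathbf{t}_2\in\mathcal{N}_{q,n}$ satisfy $\mathbf{t}_1=\mathbf{t}_2+\mathbf{e}_b-\mathbf{e}_a$ for some $a\ne b\in[1:q]$, then $d_{\mathrm{TV}}(W_{\mathbf{t}_1},W_{\mathbf{t}_2})\le\frac{C_4(\log n)^{(q-2)/2}}{\sqrt n}$; (ii) for any $\mathbf{t}_1,\mathbf{t}_2\in\mathcal{N}_{q,n}$, $d_{\mathrm{TV}}(W_{\mathbf{t}_1},W_{\mathbf{t}_2})\le\frac{C_4(\log n)^{(q-2)/2}}{\sqrt n}\,d_{\mathrm c}(\mathbf{t}_1,\mathbf{t}_2)$.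
   Context: $\mathcal{N}_{q,n}=\{\mathbf{t}\in\mathbb{Z}_{\ge0}^q:\sum t_i=n\}$ is the set of compositions of vectors in $[1:q]^n$ (composition of $\mathbf{x}$: $(N(1|\mathbf{x}),\dots,N(q|\mathbf{x}))$, $N(c|\mathbf{x})=|\{i:x_i=c\}|$). For $\mathbf{t}\in\mathcal{N}_{q,n}$, $W_{\mathbf{t}}$ is the distribution of the composition of the output of $n$ independent uses of the DMC $U$ when the input is any vector of composition $\mathbf{t}$ (the output distribution of the $q$-ary noisy composition channel for input point mass at $\mathbf{t}$). $\mathbf{e}_c$ is the $c$-th unit vector. $d_{\mathrm c}(\mathbf{t},\mathbf{t}')=\frac12\sum_i|t_i-t_i'|$; $d_{\mathrm{TV}}(P,Q)=\frac12\sum|P-Q|$. Logarithms base 2. *)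

theory Defs
  imports "HOL-Analysis.Analysis"
begin

text \<open>Alphabet is {0..<q} (standing for [1:q]); vectors of length n are
extensional functions from {..<n} to {..<q}; compositions are functions nat \<Rightarrow> nat
vanishing outside {..<q}.\<close>

definition vecs :: "nat \<Rightarrow> nat \<Rightarrow> (nat \<Rightarrow> nat) set" where
  "vecs q n = {..<n} \<rightarrow>\<^sub>E {..<q}"

definition comp :: "nat \<Rightarrow> (nat \<Rightarrow> nat) \<Rightarrow> nat \<Rightarrow> nat" where
  "comp n x = (\<lambda>c. card {i \<in> {..<n}. x i = c})"

definition comps :: "nat \<Rightarrow> nat \<Rightarrow> (nat \<Rightarrow> nat) set" where
  "comps q n = {t. (\<forall>i\<ge>q. t i = 0) \<and> (\<Sum>i<q. t i) = n}"

text \<open>Output composition distribution when the input is (some) vector of composition t.\<close>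
definition W :: "(nat \<Rightarrow> nat \<Rightarrow> real) \<Rightarrow> nat \<Rightarrow> nat \<Rightarrow> (nat \<Rightarrow> nat) \<Rightarrow> (nat \<Rightarrow> nat) \<Rightarrow> real" where
  "W U q n t s = (let x = (SOME x. x \<in> vecs q n \<and> comp n x = t) in
     (\<Sum>y \<in> {y \<in> vecs q n. comp n y = s}. \<Prod>i<n. U (x i) (y i)))"

definition dTV :: "nat \<Rightarrow> nat \<Rightarrow> ((nat \<Rightarrow> nat) \<Rightarrow> real) \<Rightarrow> ((nat \<Rightarrow> nat) \<Rightarrow> real) \<Rightarrow> real" where
  "dTV q n P Q = (1/2) * (\<Sum>s \<in> comps q n. \<bar>P s - Q s\<bar>)"

definition dc :: "nat \<Rightarrow> (nat \<Rightarrow> nat) \<Rightarrow> (nat \<Rightarrow> nat) \<Rightarrow> real" where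
  "dc q t t' = (1/2) * (\<Sum>i<q. \<bar>real (t i) - real (t' i)\<bar>)"

end

theory Submission
  imports Defs
begin


definition Px :: "(nat \<Rightarrow> nat \<Rightarrow> real) \<Rightarrow> nat \<Rightarrow> (nat \<Rightarrow> nat) \<Rightarrow> (nat \<Rightarrow> nat) \<Rightarrow> real" where
  "Px U n x y = (\<Prod>i<n. U (x i) (y i))"

definition Wx :: "(nat \<Rightarrow> nat \<Rightarrow> real) \<Rightarrow> nat \<Rightarrow> nat \<Rightarrow> (nat \<Rightarrow> nat) \<Rightarrow> (nat \<Rightarrow> nat) \<Rightarrow> real" where
  "Wx U q n x s = (\<Sum>y\<in>{y\<in>vecs q n. comp n y = s}. Px U n x y)"

lemma finite_vecs: "finite (vecs q n)"
  unfolding vecs_def by (rule finite_PiE) auto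

lemma comp_perm:
  assumes "bij_betw \<sigma> {..<n} {..<n}"
  shows "comp n (restrict (y \<circ> \<sigma>) {..<n}) = comp n y"
proof
  fix c
  have into: "\<And>i. i < n \<Longrightarrow> \<sigma> i < n" using bij_betwE[OF assms] by blast
  have onto: "\<sigma> ` {..<n} = {..<n}" by (rule bij_betw_imp_surj_on[OF assms])
  have inj: "inj_on \<sigma> {..<n}" by (rule bij_betw_imp_inj_on[OF assms])
  have "\<sigma> ` {i\<in>{..<n}. y (\<sigma> i) = c} = {k\<in>{..<n}. y k = c}"
  proof (intro equalityI subsetI)
    fix k assume "k \<in> \<sigma> ` {i\<in>{..<n}. y (\<sigma> i) = c}"
    then obtain i where i: "i < n" "y (\<sigma> i) = c" "k = \<sigma> i" by blast
    then show "k \<in> {k\<in>{..<n}. y k = c}" using into[OF i(1)] by blast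
  next
    fix k assume k: "k \<in> {k\<in>{..<n}. y k = c}"
    then have "k \<in> \<sigma> ` {..<n}" using onto by blast
    then obtain i where "i < n" "k = \<sigma> i" by blast
    then show "k \<in> \<sigma> ` {i\<in>{..<n}. y (\<sigma> i) = c}" using k by blast
  qed
  moreover have "inj_on \<sigma> {i\<in>{..<n}. y (\<sigma> i) = c}"
    by (rule inj_on_subset[OF inj]) blast
  ultimately have "card {i\<in>{..<n}. y (\<sigma> i) = c} = card {k\<in>{..<n}. y k = c}"
    by (metis card_image)
  moreover have "{i\<in>{..<n}. restrict (y \<circ> \<sigma>) {..<n} i = c} = {i\<in>{..<n}. y (\<sigma> i) = c}"
    by auto
  ultimately show "comp n (restrict (y \<circ> \<sigma>) {..<n}) c = comp n y c"
    unfolding comp_def by simp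
qed

lemma reindex_vecs:
  assumes "bij_betw \<sigma> {..<n} {..<n}"
  shows "(\<Sum>y\<in>{y\<in>vecs q n. comp n y = s}. G (restrict (y \<circ> \<sigma>) {..<n}))
       = (\<Sum>y\<in>{y\<in>vecs q n. comp n y = s}. G y)"
proof -
  define S where "S = {y\<in>vecs q n. comp n y = s}"
  define \<phi> where "\<phi> = (\<lambda>y::nat\<Rightarrow>nat. restrict (y \<circ> \<sigma>) {..<n})"
  have into: "\<And>i. i < n \<Longrightarrow> \<sigma> i < n" using bij_betwE[OF assms] by blast
  have onto: "\<sigma> ` {..<n} = {..<n}" by (rule bij_betw_imp_surj_on[OF assms])
  have fin: "finite S" unfolding S_def using finite_vecs by simp
  have sub: "\<phi> ` S \<subseteq> S"
  proof
    fix z assume "z \<in> \<phi> ` S"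
    then obtain y where y: "y \<in> S" "z = \<phi> y" by blast
    have yv: "y \<in> {..<n} \<rightarrow>\<^sub>E {..<q}" using y(1) unfolding S_def vecs_def by simp
    have "\<forall>i\<in>{..<n}. z i \<in> {..<q}"
    proof
      fix i assume i: "i \<in> {..<n}"
      then have "\<sigma> i \<in> {..<n}" using into by simp
      then have "y (\<sigma> i) \<in> {..<q}" using yv by (simp add: PiE_iff)
      then show "z i \<in> {..<q}" using i y(2) unfolding \<phi>_def by simp
    qed
    moreover have "z \<in> extensional {..<n}" using y(2) unfolding \<phi>_def by simp
    ultimately have "z \<in> vecs q n" unfolding vecs_def by (simp add: PiE_iff)
    moreover have "comp n z = s" using y comp_perm[OF assms] unfolding S_def \<phi>_def by simp
    ultimately show "z \<in> S" unfolding S_def by simp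
  qed
  have inj: "inj_on \<phi> S"
  proof
    fix y y' assume yy: "y \<in> S" "y' \<in> S" "\<phi> y = \<phi> y'"
    show "y = y'"
    proof
      fix k
      show "y k = y' k"
      proof (cases "k < n")
        case True
        then have "k \<in> \<sigma> ` {..<n}" using onto by simp
        then obtain i where i: "i < n" "\<sigma> i = k" by blast
        have "\<phi> y i = \<phi> y' i" using yy(3) by simp
        then show ?thesis using i unfolding \<phi>_def by simp
      next
        case False
        have "y \<in> extensional {..<n}" "y' \<in> extensional {..<n}"
          using yy(1,2) unfolding S_def vecs_def by (simp_all add: PiE_iff)
        then show ?thesis using False by (simp add: extensional_def)
      qed
    qed
  qed
  have "card (\<phi> ` S) = card S" using inj by (rule card_image)
  then have eq: "\<phi> ` S = S" using sub fin by (simp add: card_subset_eq)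
  have "sum G S = sum G (\<phi> ` S)" using eq by simp
  also have "\<dots> = sum (G \<circ> \<phi>) S" using inj by (rule sum.reindex)
  finally show ?thesis unfolding S_def \<phi>_def by simp
qed



lemma sum_vecs_prod:
  "(\<Sum>y\<in>vecs q n. \<Prod>i<n. F i (y i)) = (\<Prod>i<n. \<Sum>d<q. F i d :: real)"
  unfolding vecs_def by (rule prod_sum_PiE[symmetric]) auto

lemma Wx_perm:
  assumes x: "x \<in> vecs q n" and x': "x' \<in> vecs q n" and c: "comp n x = comp n x'"
  shows "Wx U q n x' s = Wx U q n x s"
proof -
  define A where "A = (\<lambda>c. {i\<in>{..<n}. x i = c})"
  define B where "B = (\<lambda>c. {i\<in>{..<n}. x' i = c})"
  have "\<forall>c. \<exists>h. bij_betw h (A c) (B c)"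
  proof
    fix c
    have "card (A c) = card (B c)" using c unfolding A_def B_def comp_def by metis
    then show "\<exists>h. bij_betw h (A c) (B c)" by (intro finite_same_card_bij) (auto simp: A_def B_def)
  qed
  then obtain h where h: "\<And>c. bij_betw (h c) (A c) (B c)" by metis
  define \<sigma> where "\<sigma> = (\<lambda>i. h (x i) i)"
  have sA: "i < n \<Longrightarrow> \<sigma> i \<in> B (x i)" for i
    using h[of "x i"] unfolding \<sigma>_def bij_betw_def A_def by auto
  have xs: "i < n \<Longrightarrow> x' (\<sigma> i) = x i" for i using sA[of i] unfolding B_def by auto
  have bij: "bij_betw \<sigma> {..<n} {..<n}"
    unfolding bij_betw_def
  proof (intro conjI)
    show "inj_on \<sigma> {..<n}"
    proof
      fix i k assume ik: "i \<in> {..<n}" "k \<in> {..<n}" "\<sigma> i = \<sigma> k"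
      then have "x i = x k" using xs by (metis lessThan_iff)
      moreover have "i \<in> A (x i)" "k \<in> A (x i)" using ik \<open>x i = x k\<close> unfolding A_def by auto
      ultimately show "i = k" using ik h[of "x i"] unfolding bij_betw_def inj_on_def \<sigma>_def by metis
    qed
    show "\<sigma> ` {..<n} = {..<n}"
    proof (intro equalityI subsetI)
      fix k assume "k \<in> \<sigma> ` {..<n}"
      then show "k \<in> {..<n}" using sA unfolding B_def by auto
    next
      fix k assume k: "k \<in> {..<n}"
      then have "k \<in> B (x' k)" unfolding B_def by auto
      then have "k \<in> h (x' k) ` A (x' k)" using h[of "x' k"] unfolding bij_betw_def by auto
      then obtain i where i: "i \<in> A (x' k)" "k = h (x' k) i" by auto
      then have "x i = x' k" "i < n" unfolding A_def by auto
      moreover have "\<sigma> i = k" unfolding \<sigma>_def using i \<open>x i = x' k\<close> by simp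
      ultimately show "k \<in> \<sigma> ` {..<n}" by (metis lessThan_iff rev_image_eqI)
    qed
  qed
  have "Px U n x' y = Px U n x (restrict (y \<circ> \<sigma>) {..<n})" for y
  proof -
    have "Px U n x' y = (\<Prod>k<n. U (x' (\<sigma> k)) (y (\<sigma> k)))"
      unfolding Px_def using prod.reindex_bij_betw[OF bij, of "\<lambda>i. U (x' i) (y i)"] by simp
    also have "\<dots> = Px U n x (restrict (y \<circ> \<sigma>) {..<n})"
      unfolding Px_def using xs by (intro prod.cong) auto
    finally show ?thesis .
  qed
  then have "Wx U q n x' s = (\<Sum>y\<in>{y\<in>vecs q n. comp n y = s}. Px U n x (restrict (y \<circ> \<sigma>) {..<n}))"
    unfolding Wx_def by simp
  also have "\<dots> = Wx U q n x s" unfolding Wx_def by (rule reindex_vecs[OF bij])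
  finally show ?thesis .
qed

lemma exists_vec: "t \<in> comps q n \<Longrightarrow> \<exists>x\<in>vecs q n. comp n x = t"
proof (induction n arbitrary: t)
  case 0
  then have "t i = 0" for i unfolding comps_def by (cases "i < q") auto
  then have "t = (\<lambda>_. 0)" by auto
  moreover have "(\<lambda>_. undefined) \<in> vecs q 0" unfolding vecs_def by auto
  moreover have "comp 0 (\<lambda>_. undefined) = (\<lambda>_. 0)" unfolding comp_def by auto
  ultimately show ?case by blast
next
  case (Suc n)
  have t0: "\<forall>i\<ge>q. t i = 0" and ts: "(\<Sum>i<q. t i) = Suc n" using Suc.prems unfolding comps_def by auto
  have "\<exists>c<q. t c > 0"
  proof (rule ccontr)
    assume "\<not> (\<exists>c<q. t c > 0)"
    then have "\<forall>i<q. t i = 0" by auto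
    then have "(\<Sum>i<q. t i) = 0" by simp
    then show False using ts by simp
  qed
  then obtain c where c: "c < q" "t c > 0" by blast
  define t' where "t' = t(c := t c - 1)"
  have "(\<Sum>i<q. t i) = t c + (\<Sum>i\<in>{..<q}-{c}. t i)" using c by (simp add: sum.remove)
  moreover have "(\<Sum>i<q. t' i) = t' c + (\<Sum>i\<in>{..<q}-{c}. t' i)" using c by (simp add: sum.remove)
  moreover have "(\<Sum>i\<in>{..<q}-{c}. t' i) = (\<Sum>i\<in>{..<q}-{c}. t i)" unfolding t'_def by simp
  ultimately have "(\<Sum>i<q. t' i) = n" using ts c unfolding t'_def by simp
  moreover have "\<forall>i\<ge>q. t' i = 0" using t0 c unfolding t'_def by auto
  ultimately have "t' \<in> comps q n" unfolding comps_def by auto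
  then obtain x' where x': "x' \<in> vecs q n" "comp n x' = t'" using Suc.IH by blast
  define x where "x = x'(n := c)"
  have "x \<in> vecs q (Suc n)" using x' c unfolding x_def vecs_def by (auto simp: PiE_iff extensional_def)
  moreover have "comp (Suc n) x = t"
  proof
    fix d
    have e: "{i\<in>{..<Suc n}. x i = d} = {i\<in>{..<n}. x' i = d} \<union> (if c = d then {n} else {})"
      unfolding x_def by auto
    have "card {i\<in>{..<Suc n}. x i = d} = card {i\<in>{..<n}. x' i = d} + (if c = d then 1 else 0)"
      unfolding e by auto
    also have "\<dots> = t d" using x'(2) c unfolding comp_def t'_def by (auto simp: fun_eq_iff)
    finally show "comp (Suc n) x d = t d" unfolding comp_def .
  qed
  ultimately show ?case by blast
qed

lemma W_eq:
  assumes "x \<in> vecs q n" "comp n x = t"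
  shows "W U q n t = Wx U q n x"
proof
  fix s
  define x0 where "x0 = (SOME x. x \<in> vecs q n \<and> comp n x = t)"
  have x0: "x0 \<in> vecs q n \<and> comp n x0 = t" unfolding x0_def by (rule someI[of _ x]) (use assms in auto)
  have "W U q n t s = Wx U q n x0 s" unfolding W_def Wx_def Px_def x0_def[symmetric] by simp
  also have "\<dots> = Wx U q n x s" using Wx_perm[of x q n x0 U s] x0 assms by simp
  finally show "W U q n t s = Wx U q n x s" .
qed



lemma vecs_lt: "y \<in> vecs q n \<Longrightarrow> i < n \<Longrightarrow> y i < q"
  unfolding vecs_def by (auto simp: PiE_iff)

lemma dp:
  fixes h :: "'a \<Rightarrow> real"
  assumes "finite V"
  shows "(\<Sum>s\<in>T. \<bar>\<Sum>y\<in>{y\<in>V. k y = s}. h y\<bar>) \<le> (\<Sum>y\<in>V. \<bar>h y\<bar>)"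
proof (cases "finite T")
  case True
  have "(\<Sum>s\<in>T. \<bar>\<Sum>y\<in>{y\<in>V. k y = s}. h y\<bar>) \<le> (\<Sum>s\<in>T. \<Sum>y\<in>{y\<in>V. k y = s}. \<bar>h y\<bar>)"
    by (intro sum_mono sum_abs)
  also have "\<dots> = (\<Sum>s\<in>T. \<Sum>y\<in>V. if k y = s then \<bar>h y\<bar> else 0)"
    using assms by (simp add: sum.inter_filter)
  also have "\<dots> = (\<Sum>y\<in>V. \<Sum>s\<in>T. if k y = s then \<bar>h y\<bar> else 0)"
    by (rule sum.swap)
  also have "\<dots> = (\<Sum>y\<in>V. if k y \<in> T then \<bar>h y\<bar> else 0)"
    using True by simp
  also have "\<dots> \<le> (\<Sum>y\<in>V. \<bar>h y\<bar>)" by (intro sum_mono) auto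
  finally show ?thesis .
next
  case False
  then show ?thesis by (simp add: sum_nonneg)
qed

lemma Px_upd:
  assumes "j < n"
  shows "Px U n (x(j := c)) y = U c (y j) * (\<Prod>i\<in>{..<n}-{j}. U (x i) (y i))"
proof -
  have "Px U n (x(j := c)) y = U c (y j) * (\<Prod>i\<in>{..<n}-{j}. U ((x(j := c)) i) (y i))"
    unfolding Px_def using prod.remove[of "{..<n}" j "\<lambda>i. U ((x(j := c)) i) (y i)"] assms by simp
  also have "(\<Prod>i\<in>{..<n}-{j}. U ((x(j := c)) i) (y i)) = (\<Prod>i\<in>{..<n}-{j}. U (x i) (y i))"
    by (intro prod.cong) auto
  finally show ?thesis .
qed

lemma core:
  fixes U :: "nat \<Rightarrow> nat \<Rightarrow> real"
  assumes pos: "\<forall>a<q. \<forall>b<q. U a b > 0" and row: "\<forall>a<q. (\<Sum>b<q. U a b) = 1"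
    and x2: "x2 \<in> vecs q n" and j: "j < n" and a: "x2 j = a" "a < q" and b: "b < q" and l: "l < q"
  defines "x1 \<equiv> x2(j := b)" and "x3 \<equiv> x2(j := l)" and "N \<equiv> card {i\<in>{..<n}. (x2(j := l)) i = l}"
    and "K0 \<equiv> (\<Sum>l<q. \<Sum>d<q. 1 / U l d)"
  shows "(\<Sum>s\<in>comps q n. \<bar>Wx U q n x1 s - Wx U q n x2 s\<bar>) \<le> sqrt (K0 / N)"
proof -
  have posU: "\<And>c d. c < q \<Longrightarrow> d < q \<Longrightarrow> U c d > 0" using pos by blast
  have posU': "\<And>c d. c < q \<Longrightarrow> d < q \<Longrightarrow> U c d \<ge> 0" using pos by (meson less_imp_le)
  define I where "I = {i\<in>{..<n}. x3 i = l}"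
  define f where "f = (\<lambda>d. (U a d - U b d) / U l d)"
  define S where "S = (\<lambda>s. {y\<in>vecs q n. comp n y = s})"
  define P where "P = Px U n x3"
  define g where "g = (\<lambda>y. \<Sum>i\<in>I. f (y i))"
  have x2j: "x2 = x2(j := a)" using a by auto
  have jI: "j \<in> I" unfolding I_def x3_def using j by auto
  have finI: "finite I" unfolding I_def by auto
  have NI: "N = card I" unfolding N_def I_def x3_def by simp
  have Npos: "N > 0" using jI finI unfolding NI by (auto simp: card_gt_0_iff)
  have x3v: "x3 \<in> vecs q n" using x2 l j unfolding x3_def vecs_def by (auto simp: PiE_iff extensional_def)
  have x3lt: "m < n \<Longrightarrow> x3 m < q" for m using vecs_lt[OF x3v] .
  \<comment> \<open>(a) change of measure\<close>
  have chg: "Px U n x2 y - Px U n x1 y = P y * f (y j)" if y: "y \<in> vecs q n" for y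
  proof -
    have yj: "y j < q" using vecs_lt[OF y j] .
    have ul: "U l (y j) > 0" using pos l yj by auto
    define R where "R = (\<Prod>i\<in>{..<n}-{j}. U (x2 i) (y i))"
    have "Px U n x2 y = U a (y j) * R" unfolding R_def using Px_upd[OF j, of U x2 a y] x2j by simp
    moreover have "Px U n x1 y = U b (y j) * R" unfolding R_def x1_def using Px_upd[OF j] by simp
    moreover have "P y = U l (y j) * R" unfolding R_def P_def x3_def using Px_upd[OF j] by simp
    ultimately show ?thesis unfolding f_def using ul by (simp add: field_simps)
  qed
  \<comment> \<open>(c) exchangeability\<close>
  have exch: "(\<Sum>y\<in>S s. P y * f (y i)) = (\<Sum>y\<in>S s. P y * f (y j))" if i: "i \<in> I" for i s
  proof -
    have i1: "i < n" "x3 i = l" using i unfolding I_def by auto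
    have x3j: "x3 j = l" unfolding x3_def by simp
    define \<sigma> where "\<sigma> = (\<lambda>k::nat. if k = i then j else if k = j then i else k)"
    have bij: "bij_betw \<sigma> {..<n} {..<n}"
      by (rule bij_betw_byWitness[where f'=\<sigma>]) (use i1 j in \<open>auto simp: \<sigma>_def\<close>)
    have x3s: "k < n \<Longrightarrow> x3 (\<sigma> k) = x3 k" for k using i1 x3j unfolding \<sigma>_def by auto
    have "P (restrict (y \<circ> \<sigma>) {..<n}) = P y" for y
    proof -
      have "P (restrict (y \<circ> \<sigma>) {..<n}) = (\<Prod>k<n. U (x3 (\<sigma> k)) (y (\<sigma> k)))"
        unfolding P_def Px_def using x3s by (intro prod.cong) auto
      also have "\<dots> = P y" unfolding P_def Px_def by (rule prod.reindex_bij_betw[OF bij])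
      finally show ?thesis .
    qed
    then have eqf: "(\<lambda>z. P z * f (z j)) (restrict (y \<circ> \<sigma>) {..<n}) = P y * f (y i)" for y
      using j unfolding \<sigma>_def by simp
    have "(\<Sum>y\<in>S s. P y * f (y i)) = (\<Sum>y\<in>S s. (\<lambda>z. P z * f (z j)) (restrict (y \<circ> \<sigma>) {..<n}))"
      by (simp only: eqf)
    also have "\<dots> = (\<Sum>y\<in>S s. P y * f (y j))" unfolding S_def by (rule reindex_vecs[OF bij])
    finally show ?thesis .
  qed
  have rep: "real N * (Wx U q n x2 s - Wx U q n x1 s) = (\<Sum>y\<in>S s. P y * g y)" for s
  proof -
    have "Wx U q n x2 s - Wx U q n x1 s = (\<Sum>y\<in>S s. P y * f (y j))"
      unfolding Wx_def S_def sum_subtractf[symmetric] using chg by (intro sum.cong) auto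
    then have "real N * (Wx U q n x2 s - Wx U q n x1 s) = (\<Sum>i\<in>I. \<Sum>y\<in>S s. P y * f (y j))"
      unfolding NI by simp
    also have "\<dots> = (\<Sum>i\<in>I. \<Sum>y\<in>S s. P y * f (y i))" using exch by simp
    also have "\<dots> = (\<Sum>y\<in>S s. P y * g y)" unfolding g_def
      by (subst sum.swap) (simp add: sum_distrib_left)
    finally show ?thesis .
  qed
  have Pnn: "P y \<ge> 0" if "y \<in> vecs q n" for y
    unfolding P_def Px_def using posU' x3lt vecs_lt[OF that] by (intro prod_nonneg) auto
  have "real N * (\<Sum>s\<in>comps q n. \<bar>Wx U q n x1 s - Wx U q n x2 s\<bar>)
      = (\<Sum>s\<in>comps q n. \<bar>real N * (Wx U q n x2 s - Wx U q n x1 s)\<bar>)"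
    by (simp add: sum_distrib_left abs_mult abs_minus_commute)
  also have "\<dots> = (\<Sum>s\<in>comps q n. \<bar>\<Sum>y\<in>{y\<in>vecs q n. comp n y = s}. P y * g y\<bar>)"
    using rep unfolding S_def by simp
  also have "\<dots> \<le> (\<Sum>y\<in>vecs q n. \<bar>P y * g y\<bar>)" by (rule dp[OF finite_vecs])
  also have "\<dots> = (\<Sum>y\<in>vecs q n. P y * \<bar>g y\<bar>)" using Pnn by (intro sum.cong) (auto simp: abs_mult)
  finally have step1: "real N * (\<Sum>s\<in>comps q n. \<bar>Wx U q n x1 s - Wx U q n x2 s\<bar>) \<le> (\<Sum>y\<in>vecs q n. P y * \<bar>g y\<bar>)" .
  have Fsum: "(\<Sum>y\<in>vecs q n. P y * h1 (y i) * h2 (y k))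
      = (\<Prod>m<n. \<Sum>d<q. U (x3 m) d * (if m = i then h1 d else 1) * (if m = k then h2 d else 1))"
    if ik: "i < n" "k < n" for i k h1 h2
  proof -
    have "P y * h1 (y i) * h2 (y k) = (\<Prod>m<n. U (x3 m) (y m) * (if m = i then h1 (y m) else 1) * (if m = k then h2 (y m) else 1))" for y
      unfolding P_def Px_def prod.distrib using ik by simp
    then show ?thesis using sum_vecs_prod by simp
  qed
  have mass: "(\<Sum>d<q. U (x3 m) d) = 1" if "m < n" for m using row x3lt[OF that] by auto
  have mean0: "(\<Sum>d<q. U l d * f d) = 0"
  proof -
    have "(\<Sum>d<q. U l d * f d) = (\<Sum>d<q. U a d - U b d)"
      unfolding f_def
    proof (intro sum.cong refl)
      fix d assume "d \<in> {..<q}"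
      then have "U l d > 0" using pos l by blast
      then show "U l d * ((U a d - U b d) / U l d) = U a d - U b d" by simp
    qed
    also have "\<dots> = 0" using row a b by (simp add: sum_subtractf)
    finally show ?thesis .
  qed
  define Kl where "Kl = (\<Sum>d<q. U l d * f d * f d)"
  have Ule1: "U c d \<le> 1" if "c < q" "d < q" for c d
  proof -
    have "U c d \<le> (\<Sum>e<q. U c e)" using posU' that by (intro member_le_sum) auto
    then show ?thesis using row that by auto
  qed
  have KlK0: "Kl \<le> K0"
  proof -
    have "Kl = (\<Sum>d<q. (U a d - U b d)^2 / U l d)"
      unfolding Kl_def f_def
    proof (intro sum.cong refl)
      fix d assume "d \<in> {..<q}"
      then have "U l d > 0" using pos l by blast
      then show "U l d * ((U a d - U b d) / U l d) * ((U a d - U b d) / U l d) = (U a d - U b d)^2 / U l d"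
        by (simp add: power2_eq_square field_simps)
    qed
    also have "\<dots> \<le> (\<Sum>d<q. 1 / U l d)"
    proof (intro sum_mono)
      fix d assume d: "d \<in> {..<q}"
      have d': "d < q" using d by simp
      have h1: "U a d > 0" "U b d > 0" using pos a(2) b d' by auto
      have h2: "U a d \<le> 1" "U b d \<le> 1" using Ule1 a(2) b d' by auto
      have "\<bar>U a d - U b d\<bar> \<le> 1" using h1 h2 by linarith
      then have "(U a d - U b d)^2 \<le> 1" by (simp add: abs_square_le_1)
      then show "(U a d - U b d)^2 / U l d \<le> 1 / U l d" using posU'[OF l d'] by (intro divide_right_mono) auto
    qed
    also have "\<dots> \<le> K0" unfolding K0_def using posU' l
      by (intro member_le_sum[of l "{..<q}" "\<lambda>l. \<Sum>d<q. 1 / U l d"]) (auto intro!: sum_nonneg)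
    finally show ?thesis .
  qed
  have cross: "(\<Sum>y\<in>vecs q n. P y * f (y i) * f (y k)) = (if i = k then Kl else 0)"
    if ik: "i \<in> I" "k \<in> I" for i k
  proof -
    have ik': "i < n" "k < n" "x3 i = l" "x3 k = l" using ik unfolding I_def by auto
    define F where "F = (\<lambda>m. \<Sum>d<q. U (x3 m) d * (if m = i then f d else 1) * (if m = k then f d else 1))"
    have "(\<Sum>y\<in>vecs q n. P y * f (y i) * f (y k)) = (\<Prod>m<n. F m)" unfolding F_def using Fsum ik' by simp
    also have "\<dots> = F i * (\<Prod>m\<in>{..<n}-{i}. F m)" using ik' by (subst prod.remove[of _ i]) auto
    also have "\<dots> = (if i = k then Kl else 0)"
    proof (cases "i = k")
      case True
      have "(\<Prod>m\<in>{..<n}-{i}. F m) = 1"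
        unfolding F_def using True mass by (intro prod.neutral) auto
      moreover have "F i = Kl" unfolding F_def Kl_def using True ik' by simp
      ultimately show ?thesis using True by simp
    next
      case False
      have "F i = 0" unfolding F_def using False ik' mean0 by simp
      then show ?thesis using False by simp
    qed
    finally show ?thesis .
  qed
  have m2: "(\<Sum>y\<in>vecs q n. P y * (g y)^2) = real N * Kl"
  proof -
    have "(\<Sum>y\<in>vecs q n. P y * (g y)^2) = (\<Sum>y\<in>vecs q n. \<Sum>i\<in>I. \<Sum>k\<in>I. P y * f (y i) * f (y k))"
      unfolding g_def power2_eq_square by (simp add: sum_distrib_left sum_distrib_right ac_simps)
    also have "\<dots> = (\<Sum>i\<in>I. \<Sum>k\<in>I. \<Sum>y\<in>vecs q n. P y * f (y i) * f (y k))"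
      by (subst sum.swap, rule sum.cong, rule refl, rule sum.swap)
    also have "\<dots> = (\<Sum>i\<in>I. \<Sum>k\<in>I. if i = k then Kl else 0)" using cross by simp
    also have "\<dots> = real N * Kl" using finI unfolding NI by simp
    finally show ?thesis .
  qed
  have m0: "(\<Sum>y\<in>vecs q n. P y) = 1"
  proof -
    have "(\<Sum>y\<in>vecs q n. P y) = (\<Prod>m<n. \<Sum>d<q. U (x3 m) d)" unfolding P_def Px_def by (rule sum_vecs_prod)
    also have "\<dots> = 1" using mass by (intro prod.neutral) auto
    finally show ?thesis .
  qed
  have K0pos: "K0 > 0" unfolding K0_def using posU posU' l
    by (intro sum_pos2[of _ l]) (auto intro!: sum_pos2[of _ 0] sum_nonneg)
  define lam where "lam = 1 / sqrt (real N * K0)"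
  have lpos: "lam > 0" unfolding lam_def using K0pos Npos by auto
  have amgm: "\<bar>g y\<bar> \<le> (lam * (g y)^2 + 1 / lam) / 2" for y
  proof -
    have "0 \<le> (lam * \<bar>g y\<bar> - 1)^2" by simp
    then have "2 * lam * \<bar>g y\<bar> \<le> lam^2 * (g y)^2 + 1" by (simp add: power2_eq_square algebra_simps)
    then show ?thesis using lpos by (simp add: field_simps power2_eq_square)
  qed
  have "(\<Sum>y\<in>vecs q n. P y * \<bar>g y\<bar>) \<le> (\<Sum>y\<in>vecs q n. P y * ((lam * (g y)^2 + 1 / lam) / 2))"
    using Pnn amgm by (intro sum_mono mult_left_mono) auto
  also have "\<dots> = (lam * (\<Sum>y\<in>vecs q n. P y * (g y)^2) + (1/lam) * (\<Sum>y\<in>vecs q n. P y)) / 2"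
  proof -
    have "(\<Sum>y\<in>vecs q n. P y * ((lam * (g y)^2 + 1 / lam) / 2))
        = (\<Sum>y\<in>vecs q n. (lam * (P y * (g y)^2) + (1/lam) * P y) / 2)"
      by (intro sum.cong refl) (simp add: algebra_simps)
    also have "\<dots> = (\<Sum>y\<in>vecs q n. lam * (P y * (g y)^2) + (1/lam) * P y) / 2"
      by (simp add: sum_divide_distrib)
    also have "\<dots> = (lam * (\<Sum>y\<in>vecs q n. P y * (g y)^2) + (1/lam) * (\<Sum>y\<in>vecs q n. P y)) / 2"
      by (simp add: sum.distrib sum_distrib_left)
    finally show ?thesis .
  qed
  also have "\<dots> = (lam * (real N * Kl) + 1/lam) / 2" using m2 m0 by simp
  also have "\<dots> \<le> (lam * (real N * K0) + 1/lam) / 2"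
    using lpos KlK0 Npos by (simp add: mult_left_mono)
  also have "\<dots> = sqrt (real N * K0)"
  proof -
    have s: "sqrt (real N * K0) > 0" using K0pos Npos by auto
    have z: "real N * K0 \<ge> 0" using K0pos by simp
    have "lam * (real N * K0) = (real N * K0) / sqrt (real N * K0)" unfolding lam_def by simp
    also have "\<dots> = sqrt (real N * K0)" using z by (rule real_div_sqrt)
    finally have "lam * (real N * K0) = sqrt (real N * K0)" .
    moreover have "1/lam = sqrt (real N * K0)" unfolding lam_def by simp
    ultimately show ?thesis by simp
  qed
  finally have "real N * (\<Sum>s\<in>comps q n. \<bar>Wx U q n x1 s - Wx U q n x2 s\<bar>) \<le> sqrt (real N * K0)"
    using step1 by linarith
  then have "(\<Sum>s\<in>comps q n. \<bar>Wx U q n x1 s - Wx U q n x2 s\<bar>) \<le> sqrt (real N * K0) / real N"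
    using Npos by (simp add: field_simps)
  also have "\<dots> = sqrt (K0 / N)"
  proof -
    have rp: "sqrt (real N) > 0" using Npos by simp
    have r1: "sqrt (real N) / real N = 1 / sqrt (real N)" using rp Npos by (simp add: field_simps)
    have "sqrt (real N * K0) / real N = sqrt K0 * (sqrt (real N) / real N)" by (simp add: real_sqrt_mult)
    also have "\<dots> = sqrt K0 / sqrt (real N)" using r1 by simp
    also have "\<dots> = sqrt (K0 / N)" by (simp add: real_sqrt_divide)
    finally show ?thesis .
  qed
  finally show ?thesis .
qed



lemma dTV_tri: "dTV q n P R \<le> dTV q n P Q + dTV q n Q R"
proof -
  have "(\<Sum>s\<in>comps q n. \<bar>P s - R s\<bar>) \<le> (\<Sum>s\<in>comps q n. \<bar>P s - Q s\<bar> + \<bar>Q s - R s\<bar>)"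
    by (intro sum_mono) linarith
  then show ?thesis unfolding dTV_def by (simp add: sum.distrib)
qed

lemma dTV_self: "dTV q n P P = 0" unfolding dTV_def by simp

lemma dc_nonneg: "dc q t t' \<ge> 0" unfolding dc_def by (simp add: sum_nonneg)

lemma path:
  fixes V :: "(nat \<Rightarrow> nat) \<Rightarrow> (nat \<Rightarrow> nat) \<Rightarrow> real"
  assumes B: "B \<ge> 0"
    and adj: "\<forall>t1\<in>comps q n. \<forall>t2\<in>comps q n. \<forall>a<q. \<forall>b<q.
        a \<noteq> b \<and> (\<forall>i. int (t1 i) = int (t2 i) + (if i = b then 1 else 0) - (if i = a then 1 else 0))
        \<longrightarrow> dTV q n (V t1) (V t2) \<le> B"
    and t1: "t1 \<in> comps q n"
  shows "\<forall>t2\<in>comps q n. 2 * dc q t1 t2 \<le> real k \<longrightarrow> dTV q n (V t1) (V t2) \<le> B * dc q t1 t2"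
proof (induction k)
  have base: "dTV q n (V t1) (V t2) \<le> B * dc q t1 t2" if t2: "t2 \<in> comps q n" and "dc q t1 t2 = 0" for t2
  proof -
    have "(\<Sum>i<q. \<bar>real (t1 i) - real (t2 i)\<bar>) = 0" using that(2) unfolding dc_def by simp
    then have "\<forall>i\<in>{..<q}. \<bar>real (t1 i) - real (t2 i)\<bar> = 0"
      by (subst sum_nonneg_eq_0_iff[symmetric]) auto
    then have "t1 i = t2 i" for i using t1 t2 unfolding comps_def by (cases "i < q") auto
    then have "t1 = t2" by auto
    then show ?thesis using dc_nonneg[of q t1 t2] B by (simp add: dTV_self)
  qed
  {
    case 0
    show ?case
    proof (intro ballI impI)
      fix t2 assume t2: "t2 \<in> comps q n" and "2 * dc q t1 t2 \<le> real 0"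
      then have "dc q t1 t2 = 0" using dc_nonneg[of q t1 t2] by simp
      then show "dTV q n (V t1) (V t2) \<le> B * dc q t1 t2" using base t2 by blast
    qed
  next
    case (Suc k)
    show ?case
    proof (intro ballI impI)
      fix t2 assume t2: "t2 \<in> comps q n" and k: "2 * dc q t1 t2 \<le> real (Suc k)"
      show "dTV q n (V t1) (V t2) \<le> B * dc q t1 t2"
      proof (cases "dc q t1 t2 = 0")
        case True then show ?thesis using base t2 by blast
      next
        case False
        have s1: "(\<Sum>i<q. t1 i) = n" and s2: "(\<Sum>i<q. t2 i) = n" and z1: "\<forall>i\<ge>q. t1 i = 0" and z2: "\<forall>i\<ge>q. t2 i = 0"
          using t1 t2 unfolding comps_def by auto
        obtain i0 where i0: "i0 < q" "t1 i0 \<noteq> t2 i0"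
        proof -
          have "\<exists>i<q. t1 i \<noteq> t2 i"
          proof (rule ccontr)
            assume "\<not> (\<exists>i<q. t1 i \<noteq> t2 i)"
            then have "(\<Sum>i<q. \<bar>real (t1 i) - real (t2 i)\<bar>) = 0" by simp
            then show False using False unfolding dc_def by simp
          qed
          then show ?thesis using that by blast
        qed
        have "\<exists>a<q. t2 a > t1 a"
        proof (rule ccontr)
          assume "\<not> (\<exists>a<q. t2 a > t1 a)"
          then have le: "\<forall>x\<in>{..<q}. t2 x \<le> t1 x" by auto
          moreover have "\<exists>x\<in>{..<q}. t2 x < t1 x" using i0 le by (metis le_neq_implies_less lessThan_iff)
          ultimately have "(\<Sum>i<q. t2 i) < (\<Sum>i<q. t1 i)" by (intro sum_strict_mono_ex1) auto
          then show False using s1 s2 by simp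
        qed
        then obtain a where a: "a < q" "t2 a > t1 a" by blast
        have "\<exists>b<q. t1 b > t2 b"
        proof (rule ccontr)
          assume "\<not> (\<exists>b<q. t1 b > t2 b)"
          then have le: "\<forall>x\<in>{..<q}. t1 x \<le> t2 x" by auto
          moreover have "\<exists>x\<in>{..<q}. t1 x < t2 x" using i0 le by (metis le_neq_implies_less lessThan_iff)
          ultimately have "(\<Sum>i<q. t1 i) < (\<Sum>i<q. t2 i)" by (intro sum_strict_mono_ex1) auto
          then show False using s1 s2 by simp
        qed
        then obtain b where b: "b < q" "t1 b > t2 b" by blast
        have ab: "a \<noteq> b" using a b by auto
        define t' where "t' = (\<lambda>i. if i = a then t2 a - 1 else if i = b then t2 b + 1 else t2 i)"
        have ti: "int (t' i) = int (t2 i) + (if i = b then 1 else 0) - (if i = a then 1 else 0)" for i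
          using a ab unfolding t'_def by auto
        have "(\<Sum>i<q. int (t' i)) = (\<Sum>i<q. int (t2 i) + (if i = b then 1 else 0) - (if i = a then 1 else 0))"
          using ti by simp
        also have "\<dots> = (\<Sum>i<q. int (t2 i))" using a b by (simp add: sum.distrib sum_subtractf)
        finally have "(\<Sum>i<q. int (t' i)) = (\<Sum>i<q. int (t2 i))" .
        then have "int (\<Sum>i<q. t' i) = int (\<Sum>i<q. t2 i)" by (simp only: of_nat_sum)
        then have "(\<Sum>i<q. t' i) = (\<Sum>i<q. t2 i)" by (simp only: of_nat_eq_iff)
        then have "(\<Sum>i<q. t' i) = n" using s2 by simp
        moreover have "\<forall>i\<ge>q. t' i = 0" using z2 a b unfolding t'_def by auto
        ultimately have t'c: "t' \<in> comps q n" unfolding comps_def by auto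
        have pt: "\<bar>real (t1 i) - real (t' i)\<bar> = \<bar>real (t1 i) - real (t2 i)\<bar> - (if i = a then 1 else 0) - (if i = b then 1 else 0)" for i
        proof -
          have "real (t' i) = real (t2 i) + (if i = b then 1 else 0) - (if i = a then 1 else 0)"
            using a ab unfolding t'_def by (cases "i = a"; cases "i = b") (auto simp: of_nat_diff)
          then show ?thesis using a b ab by (cases "i = a"; cases "i = b") auto
        qed
        have "(\<Sum>i<q. \<bar>real (t1 i) - real (t' i)\<bar>) = (\<Sum>i<q. \<bar>real (t1 i) - real (t2 i)\<bar>) - 2"
          using a b ab by (simp add: pt sum.distrib sum_subtractf)
        then have dc': "dc q t1 t' = dc q t1 t2 - 1" unfolding dc_def by simp
        have "2 * dc q t1 t' \<le> real k" using dc' k by simp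
        then have "dTV q n (V t1) (V t') \<le> B * dc q t1 t'" using Suc.IH t'c by blast
        moreover have "dTV q n (V t') (V t2) \<le> B" using adj t'c t2 a b ab ti by blast
        ultimately have "dTV q n (V t1) (V t2) \<le> B * dc q t1 t' + B" using dTV_tri[of q n "V t1" "V t2" "V t'"] by linarith
        also have "\<dots> = B * dc q t1 t2" unfolding dc' by (simp add: algebra_simps)
        finally show ?thesis .
      qed
    qed
  }
qed



lemma adj_bound:
  fixes U :: "nat \<Rightarrow> nat \<Rightarrow> real"
  assumes pos: "\<forall>a<q. \<forall>b<q. U a b > 0" and row: "\<forall>a<q. (\<Sum>b<q. U a b) = 1"
    and n: "n > 0"
    and t1: "t1 \<in> comps q n" and t2: "t2 \<in> comps q n" and a: "a < q" and b: "b < q" and ab: "a \<noteq> b"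
    and adj: "\<forall>i. int (t1 i) = int (t2 i) + (if i = b then 1 else 0) - (if i = a then 1 else 0)"
  shows "dTV q n (W U q n t1) (W U q n t2) \<le> sqrt ((\<Sum>l<q. \<Sum>d<q. 1 / U l d) * q) / (2 * sqrt n)"
proof -
  define K0 where "K0 = (\<Sum>l<q. \<Sum>d<q. 1 / U l d)"
  obtain x2 where x2: "x2 \<in> vecs q n" "comp n x2 = t2" using exists_vec[OF t2] by blast
  have "int (t1 a) = int (t2 a) - 1" using adj[rule_format, of a] ab by simp
  then have ta: "t2 a \<ge> 1" by linarith
  have "card {i\<in>{..<n}. x2 i = a} = t2 a" using x2(2) unfolding comp_def by metis
  then have "{i\<in>{..<n}. x2 i = a} \<noteq> {}" using ta by (metis card.empty not_one_le_zero)
  then obtain j where j: "j < n" "x2 j = a" by blast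
  define x1 where "x1 = x2(j := b)"
  have x1v: "x1 \<in> vecs q n" using x2(1) b j unfolding x1_def vecs_def by (simp add: PiE_iff extensional_def)
  have "comp n x1 = t1"
  proof
    fix c
    have "int (card {i\<in>{..<n}. x1 i = c}) = int (t2 c) + (if c = b then 1 else 0) - (if c = a then 1 else 0)"
    proof -
      have ct: "card {i\<in>{..<n}. x2 i = c} = t2 c" using x2(2) unfolding comp_def by metis
      consider "c = a" | "c = b" | "c \<noteq> a" "c \<noteq> b" by blast
      then show ?thesis
      proof cases
        case 1
        have "{i\<in>{..<n}. x1 i = c} = {i\<in>{..<n}. x2 i = c} - {j}" using 1 ab unfolding x1_def by auto
        moreover have "j \<in> {i\<in>{..<n}. x2 i = c}" using j 1 by simp
        ultimately have "card {i\<in>{..<n}. x1 i = c} = t2 c - 1" using ct by simp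
        then show ?thesis using 1 ab ta by simp
      next
        case 2
        have "{i\<in>{..<n}. x1 i = c} = insert j {i\<in>{..<n}. x2 i = c}" using 2 j unfolding x1_def by auto
        moreover have "j \<notin> {i\<in>{..<n}. x2 i = c}" using j 2 ab by simp
        ultimately have "card {i\<in>{..<n}. x1 i = c} = t2 c + 1" using ct by simp
        then show ?thesis using 2 ab by simp
      next
        case 3
        have "{i\<in>{..<n}. x1 i = c} = {i\<in>{..<n}. x2 i = c}" using 3 j unfolding x1_def by auto
        then show ?thesis using 3 ct by simp
      qed
    qed
    then have "int (comp n x1 c) = int (t1 c)" using adj unfolding comp_def by simp
    then show "comp n x1 c = t1 c" by simp
  qed
  then have W1: "W U q n t1 = Wx U q n x1" using W_eq x1v by blast
  have W2: "W U q n t2 = Wx U q n x2" using W_eq x2 by blast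
  \<comment> \<open>most frequent letter\<close>
  have s2: "(\<Sum>i<q. t2 i) = n" using t2 unfolding comps_def by simp
  have "\<exists>l<q. q * t2 l \<ge> n"
  proof (rule ccontr)
    assume "\<not> (\<exists>l<q. q * t2 l \<ge> n)"
    then have lt: "\<forall>l\<in>{..<q}. q * t2 l < n" by auto
    have q0: "q > 0" using a by simp
    have "(\<Sum>l<q. q * t2 l) < (\<Sum>l<q. n)" using lt q0 by (intro sum_strict_mono) auto
    then have "q * n < q * n" using s2 by (simp add: sum_distrib_left[symmetric])
    then show False by simp
  qed
  then obtain l where l: "l < q" "q * t2 l \<ge> n" by blast
  define N where "N = card {i\<in>{..<n}. (x2(j := l)) i = l}"
  have core': "(\<Sum>s\<in>comps q n. \<bar>Wx U q n x1 s - Wx U q n x2 s\<bar>) \<le> sqrt (K0 / N)"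
    using core[OF pos row x2(1) j(1) j(2) a b l(1)] unfolding x1_def N_def K0_def by simp
  have "{i\<in>{..<n}. x2 i = l} \<subseteq> {i\<in>{..<n}. (x2(j := l)) i = l}" by auto
  then have "card {i\<in>{..<n}. x2 i = l} \<le> N" unfolding N_def by (intro card_mono) auto
  moreover have "card {i\<in>{..<n}. x2 i = l} = t2 l" using x2(2) unfolding comp_def by metis
  ultimately have tN: "t2 l \<le> N" by simp
  have qN: "real n \<le> real q * real N"
  proof -
    have "n \<le> q * N" using l(2) tN by (meson le_trans mult_le_mono2)
    then show ?thesis by (metis of_nat_le_iff of_nat_mult)
  qed
  have Npos: "N > 0" using qN n by (metis gr0I mult_zero_right of_nat_0 of_nat_0_less_iff not_le)
  have K0pos: "K0 \<ge> 0" unfolding K0_def using pos by (intro sum_nonneg) (auto intro: less_imp_le)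
  have "K0 / N \<le> K0 * q / n"
  proof -
    have "K0 * n \<le> K0 * (q * N)" using qN K0pos by (intro mult_left_mono) auto
    then show ?thesis using Npos n by (simp add: field_simps)
  qed
  then have "sqrt (K0 / N) \<le> sqrt (K0 * q / n)" by simp
  also have "\<dots> = sqrt (K0 * q) / sqrt n" by (simp add: real_sqrt_divide)
  finally have "(\<Sum>s\<in>comps q n. \<bar>Wx U q n x1 s - Wx U q n x2 s\<bar>) \<le> sqrt (K0 * q) / sqrt n"
    using core' by linarith
  then show ?thesis unfolding dTV_def W1 W2 K0_def by simp
qed



theorem lemma11:
  fixes q :: nat and U :: "nat \<Rightarrow> nat \<Rightarrow> real"
  assumes "q \<ge> 2"
    and "\<forall>a<q. \<forall>b<q. U a b > 0"
    and "\<forall>a<q. (\<Sum>b<q. U a b) = 1"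
  shows "\<exists>C4::real. \<forall>\<^sub>F n in sequentially.
    (\<forall>t1\<in>comps q n. \<forall>t2\<in>comps q n. \<forall>a<q. \<forall>b<q.
        a \<noteq> b \<and> (\<forall>i. int (t1 i) = int (t2 i) + (if i = b then 1 else 0) - (if i = a then 1 else 0))
        \<longrightarrow> dTV q n (W U q n t1) (W U q n t2)
              \<le> C4 * (log 2 (real n)) powr ((real q - 2) / 2) / sqrt (real n)) \<and>
    (\<forall>t1\<in>comps q n. \<forall>t2\<in>comps q n.
        dTV q n (W U q n t1) (W U q n t2)
          \<le> C4 * (log 2 (real n)) powr ((real q - 2) / 2) / sqrt (real n) * dc q t1 t2)"
proof -
  define K0 where "K0 = (\<Sum>l<q. \<Sum>d<q. 1 / U l d)"
  define C4 where "C4 = sqrt (K0 * q)"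
  have K0pos: "K0 \<ge> 0" unfolding K0_def using assms(2) by (intro sum_nonneg) (auto intro: less_imp_le)
  have C4pos: "C4 \<ge> 0" unfolding C4_def using K0pos by simp
  show ?thesis
  proof (intro exI[of _ C4] eventually_sequentiallyI[of 2])
    fix n :: nat assume n: "2 \<le> n"
    define L where "L = (log 2 (real n)) powr ((real q - 2) / 2)"
    define B where "B = C4 * L / sqrt (real n)"
    have "log 2 (real n) \<ge> log 2 2" using n by (subst log_le_cancel_iff) auto
    then have lg: "log 2 (real n) \<ge> 1" by simp
    have ex: "(real q - 2) / 2 \<ge> 0" using assms(1) by simp
    have L1: "L \<ge> 1" unfolding L_def using lg ex by (rule ge_one_powr_ge_zero)
    have sn: "sqrt (real n) > 0" using n by simp
    have Bnn: "B \<ge> 0" unfolding B_def using C4pos L1 sn by simp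
    have bnd: "C4 / (2 * sqrt (real n)) \<le> B"
    proof -
      have "C4 / (2 * sqrt (real n)) \<le> C4 / sqrt (real n)" using C4pos sn by (simp add: frac_le)
      also have "\<dots> \<le> C4 * L / sqrt (real n)" using C4pos L1 sn
        by (intro divide_right_mono) (auto intro: mult_left_mono[of 1 L C4, simplified])
      finally show ?thesis unfolding B_def .
    qed
    have part1: "\<forall>t1\<in>comps q n. \<forall>t2\<in>comps q n. \<forall>a<q. \<forall>b<q.
        a \<noteq> b \<and> (\<forall>i. int (t1 i) = int (t2 i) + (if i = b then 1 else 0) - (if i = a then 1 else 0))
        \<longrightarrow> dTV q n (W U q n t1) (W U q n t2) \<le> B"
    proof (intro ballI allI impI)
      fix t1 t2 a b assume t: "t1 \<in> comps q n" "t2 \<in> comps q n" "a < q" "b < q"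
        and h: "a \<noteq> b \<and> (\<forall>i. int (t1 i) = int (t2 i) + (if i = b then 1 else 0) - (if i = a then 1 else 0))"
      have "dTV q n (W U q n t1) (W U q n t2) \<le> C4 / (2 * sqrt (real n))"
        using adj_bound[OF assms(2) assms(3) _ t(1) t(2) t(3) t(4)] h n
        unfolding C4_def K0_def by simp
      then show "dTV q n (W U q n t1) (W U q n t2) \<le> B" using bnd by linarith
    qed
    have part2: "\<forall>t1\<in>comps q n. \<forall>t2\<in>comps q n. dTV q n (W U q n t1) (W U q n t2) \<le> B * dc q t1 t2"
    proof (intro ballI)
      fix t1 t2 assume t1: "t1 \<in> comps q n" and t2: "t2 \<in> comps q n"
      obtain k where k: "2 * dc q t1 t2 \<le> real k" using real_arch_simple by blast
      show "dTV q n (W U q n t1) (W U q n t2) \<le> B * dc q t1 t2"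
        using path[OF Bnn part1 t1, of k] t2 k by blast
    qed
    show "(\<forall>t1\<in>comps q n. \<forall>t2\<in>comps q n. \<forall>a<q. \<forall>b<q.
        a \<noteq> b \<and> (\<forall>i. int (t1 i) = int (t2 i) + (if i = b then 1 else 0) - (if i = a then 1 else 0))
        \<longrightarrow> dTV q n (W U q n t1) (W U q n t2)
              \<le> C4 * (log 2 (real n)) powr ((real q - 2) / 2) / sqrt (real n)) \<and>
    (\<forall>t1\<in>comps q n. \<forall>t2\<in>comps q n.
        dTV q n (W U q n t1) (W U q n t2)
          \<le> C4 * (log 2 (real n)) powr ((real q - 2) / 2) / sqrt (real n) * dc q t1 t2)"
      using part1 part2 unfolding B_def L_def by blast
  qed
qed


end
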